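(* Assume (1) $D\in C^4(\mathbb{R}^d)$, $\rho_{eq}\in C^4(\mathbb{R}^d)$ with $\rho_{eq}>0$, and all partial derivatives of $D$ and $\ln\rho_{eq}$ of orders $1$ through $4$ are bounded; (2) $\|\nabla^2D(x)\|$ and $\|\nabla^2\ln\rho_{eq}(x)\|$ are bounded by a polynomial in $x$, and $\inf_xD(x)>0$. Let $g:\mathbb{R}^d\to\mathbb{R}$ be a polynomial. Then there is a function $K(x)$ of at most polynomial growth such that for all $x\in\mathbb{R}^d$ and $\epsilon\in(0,1]$, $$\Big|\int_{\mathbb{R}^d} g(z)\big(\alpha(x,z,\epsilon)-\beta(x,z,\epsilon)\big)q(x,z)\,dz\Big|\le K(x)\epsilon^2.$$
   Context: Define $q(x,z)=(4\pi D(x))^{-d/2}\exp\big(-\frac{|z|^2}{4D(x)}\big)$ for $x,z\in\mathbb{R}^d$, $$\alpha(x,z,\epsilon)=\min\Big(1,\frac{q(x+\epsilon z,z)\,\rho_{eq}(x+\epsilon z)}{q(x,z)\,\rho_{eq}(x)}\Big),\qquad \beta(x,z,\epsilon)=\min\Big(1,\exp\Big(\epsilon\frac{\nabla_xq(x,z)\cdot z}{q(x,z)}+\epsilon\frac{\nabla\rho_{eq}(x)\cdot z}{\rho_{eq}(x)}\Big)\Big),$$ where $\nabla_x$ denotes the gradient in the first argument. *)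

theory Defs
  imports "HOL-Analysis.Analysis"
begin

definition partial :: "'n::finite \<Rightarrow> (real^'n \<Rightarrow> real) \<Rightarrow> real^'n \<Rightarrow> real" where
  "partial i f x = deriv (\<lambda>t. f (x + t *\<^sub>R axis i 1)) 0"

fun partials :: "'n::finite list \<Rightarrow> (real^'n \<Rightarrow> real) \<Rightarrow> real^'n \<Rightarrow> real" where
  "partials [] f = f"
| "partials (i # is) f = partial i (partials is f)"

fun Ck :: "nat \<Rightarrow> (real^'n::finite \<Rightarrow> real) \<Rightarrow> bool" where
  "Ck 0 f = continuous_on UNIV f"
| "Ck (Suc k) f = (continuous_on UNIV f \<and>
     (\<forall>i. (\<forall>x. (\<lambda>t. f (x + t *\<^sub>R axis i 1)) differentiable (at 0)) \<and> Ck k (partial i f)))"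

definition grad :: "(real^'n::finite \<Rightarrow> real) \<Rightarrow> real^'n \<Rightarrow> real^'n" where
  "grad f x = (\<chi> i. partial i f x)"

definition hessian :: "(real^'n::finite \<Rightarrow> real) \<Rightarrow> real^'n \<Rightarrow> real^'n^'n" where
  "hessian f x = (\<chi> i j. partial i (partial j f) x)"

definition polynomial_fun :: "(real^'n::finite \<Rightarrow> real) \<Rightarrow> bool" where
  "polynomial_fun g \<longleftrightarrow> (\<exists>A c. finite A \<and>
     (\<forall>x. g x = (\<Sum>a\<in>A. c a * (\<Prod>i\<in>UNIV. (x $ i) ^ (a i)))))"

definition qker :: "(real^'n::finite \<Rightarrow> real) \<Rightarrow> real^'n \<Rightarrow> real^'n \<Rightarrow> real" where
  "qker D x z = (4 * pi * D x) powr (- real CARD('n) / 2) * exp (- (norm z)\<^sup>2 / (4 * D x))"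

definition alpha :: "(real^'n::finite \<Rightarrow> real) \<Rightarrow> (real^'n \<Rightarrow> real) \<Rightarrow> real^'n \<Rightarrow> real^'n \<Rightarrow> real \<Rightarrow> real" where
  "alpha D \<rho> x z \<epsilon> = min 1 ((qker D (x + \<epsilon> *\<^sub>R z) z * \<rho> (x + \<epsilon> *\<^sub>R z)) / (qker D x z * \<rho> x))"

definition beta :: "(real^'n::finite \<Rightarrow> real) \<Rightarrow> (real^'n \<Rightarrow> real) \<Rightarrow> real^'n \<Rightarrow> real^'n \<Rightarrow> real \<Rightarrow> real" where
  "beta D \<rho> x z \<epsilon> = min 1 (exp (\<epsilon> * ((grad (\<lambda>y. qker D y z) x \<bullet> z) / qker D x z)
                                 + \<epsilon> * ((grad \<rho> x \<bullet> z) / \<rho> x)))"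

end

theory Submission
  imports Defs "HOL-Probability.Distributions"
begin


lemma mvt_bound:
  fixes g g' :: "real \<Rightarrow> real"
  assumes der: "\<And>t. min a b \<le> t \<Longrightarrow> t \<le> max a b \<Longrightarrow> (g has_real_derivative g' t) (at t)"
    and bd: "\<And>t. min a b \<le> t \<Longrightarrow> t \<le> max a b \<Longrightarrow> \<bar>g' t\<bar> \<le> B"
  shows "\<bar>g b - g a\<bar> \<le> B * \<bar>b - a\<bar>"
proof (cases a b rule: linorder_cases)
  case less
  then obtain z where z: "a < z" "z < b" "g b - g a = (b - a) * g' z"
    using MVT2[of a b g g'] der by (auto simp: min_def max_def)
  have "\<bar>g' z\<bar> \<le> B" using bd z less by (auto simp: min_def max_def)
  then show ?thesis using z less by (simp add: abs_mult mult.commute mult_right_mono)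
next
  case equal then show ?thesis using bd[of a] by simp
next
  case greater
  then obtain z where z: "b < z" "z < a" "g a - g b = (a - b) * g' z"
    using MVT2[of b a g g'] der by (auto simp: min_def max_def)
  have "\<bar>g' z\<bar> \<le> B" using bd z greater by (auto simp: min_def max_def)
  then show ?thesis using z greater by (simp add: abs_mult mult.commute mult_right_mono abs_minus_commute)
qed

lemma partial_deriv_at:
  fixes f :: "real^'n::finite \<Rightarrow> real"
  assumes dif: "\<And>y. (\<lambda>t. f (y + t *\<^sub>R axis i 1)) differentiable (at 0)"
  shows "((\<lambda>s. f (y + s *\<^sub>R axis i 1)) has_real_derivative partial i f (y + t *\<^sub>R axis i 1)) (at t)"
proof -
  have "((\<lambda>u. f ((y + t *\<^sub>R axis i 1) + u *\<^sub>R axis i 1)) has_real_derivative partial i f (y + t *\<^sub>R axis i 1)) (at 0)"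
    using dif[of "y + t *\<^sub>R axis i 1"] unfolding partial_def
    by (simp add: DERIV_deriv_iff_real_differentiable)
  then have "((\<lambda>u. f (y + (u + t) *\<^sub>R axis i 1)) has_real_derivative partial i f (y + t *\<^sub>R axis i 1)) (at 0)"
    by (simp add: algebra_simps scaleR_add_left)
  then show ?thesis using DERIV_shift[of "\<lambda>s. f (y + s *\<^sub>R axis i 1)" _ 0 t] by simp
qed

lemma frechet_from_partials:
  fixes f :: "real^'n::finite \<Rightarrow> real"
  assumes dif: "\<And>i y. (\<lambda>t. f (y + t *\<^sub>R axis i 1)) differentiable (at 0)"
    and cont: "\<And>i. continuous_on UNIV (partial i f)"
  shows "(f has_derivative (\<lambda>v. \<Sum>i\<in>UNIV. v $ i * partial i f x)) (at x)"
  unfolding has_derivative_at_alt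
proof (intro conjI allI impI)
  show "bounded_linear (\<lambda>v. \<Sum>i\<in>UNIV. v $ i * partial i f x)"
    by (intro bounded_linear_sum) (rule bounded_linear_compose[OF bounded_linear_mult_left bounded_linear_vec_nth])
  fix e :: real assume e: "e > 0"
  define \<eta> where "\<eta> = e / real CARD('n)"
  have eta: "\<eta> > 0" using e by (simp add: \<eta>_def)
  have "\<forall>\<^sub>F y in at x. \<forall>i. dist (partial i f y) (partial i f x) < \<eta>"
  proof (rule eventually_all_finite)
    fix i
    have "isCont (partial i f) x" using cont[of i] continuous_on_eq_continuous_at by blast
    then show "\<forall>\<^sub>F y in at x. dist (partial i f y) (partial i f x) < \<eta>"
      unfolding isCont_def using eta tendsto_iff by blast
  qed
  then obtain d where d: "d > 0" and dd: "\<And>y i. y \<noteq> x \<Longrightarrow> dist y x < d \<Longrightarrow> dist (partial i f y) (partial i f x) < \<eta>"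
    unfolding eventually_at by blast
  have close: "\<And>y i. dist y x < d \<Longrightarrow> \<bar>partial i f y - partial i f x\<bar> \<le> \<eta>"
  proof -
    fix y i assume "dist y x < d"
    then show "\<bar>partial i f y - partial i f x\<bar> \<le> \<eta>"
      using dd[of y i] eta by (cases "y = x") (auto simp: dist_real_def)
  qed
  have claim: "finite S \<Longrightarrow> (\<Sum>j\<in>UNIV. \<bar>v$j\<bar>) < d \<Longrightarrow>
     \<bar>f (x + (\<Sum>j\<in>S. v$j *\<^sub>R axis j 1)) - f x - (\<Sum>j\<in>S. v$j * partial j f x)\<bar> \<le> \<eta> * (\<Sum>j\<in>S. \<bar>v$j\<bar>)" for S v
  proof (induction S rule: finite_induct)
    case empty then show ?case by simp
  next
    case (insert i S)
    define w where "w = x + (\<Sum>j\<in>S. v$j *\<^sub>R axis j 1)"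
    have nw: "norm (w - x) \<le> (\<Sum>j\<in>S. \<bar>v$j\<bar>)"
      unfolding w_def using norm_sum[of "\<lambda>j. v$j *\<^sub>R axis j (1::real)" S]
      by (simp add: norm_axis_1)
    have sub: "(\<Sum>j\<in>insert i S. \<bar>v$j\<bar>) \<le> (\<Sum>j\<in>UNIV. \<bar>v$j\<bar>)"
      by (intro sum_mono2) auto
    have step: "\<bar>(f (w + v$i *\<^sub>R axis i 1) - v$i * partial i f x) - (f (w + 0 *\<^sub>R axis i 1) - 0 * partial i f x)\<bar> \<le> \<eta> * \<bar>v$i - 0\<bar>"
    proof (rule mvt_bound[where g'="\<lambda>s. partial i f (w + s *\<^sub>R axis i 1) - partial i f x"])
      fix t assume t: "min 0 (v$i) \<le> t" "t \<le> max 0 (v$i)"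
      show "((\<lambda>s. f (w + s *\<^sub>R axis i 1) - s * partial i f x) has_real_derivative partial i f (w + t *\<^sub>R axis i 1) - partial i f x) (at t)"
        by (rule derivative_eq_intros partial_deriv_at[OF dif] | simp)+
      have "\<bar>t\<bar> \<le> \<bar>v$i\<bar>" using t by (auto simp: min_def max_def split: if_splits)
      then have "dist (w + t *\<^sub>R axis i 1) x \<le> (\<Sum>j\<in>S. \<bar>v$j\<bar>) + \<bar>v$i\<bar>"
        using nw norm_triangle_ineq[of "w - x" "t *\<^sub>R axis i 1"]
        by (simp add: dist_norm norm_axis_1 algebra_simps)
      also have "\<dots> < d" using sub insert by simp
      finally show "\<bar>partial i f (w + t *\<^sub>R axis i 1) - partial i f x\<bar> \<le> \<eta>" using close by blast
    qed
    have eqx: "x + (\<Sum>j\<in>insert i S. v$j *\<^sub>R axis j 1) = w + v$i *\<^sub>R axis i 1"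
      using insert by (simp add: w_def algebra_simps)
    have IH: "\<bar>f w - f x - (\<Sum>j\<in>S. v$j * partial j f x)\<bar> \<le> \<eta> * (\<Sum>j\<in>S. \<bar>v$j\<bar>)"
      using insert w_def by simp
    have sums: "(\<Sum>j\<in>insert i S. v$j * partial j f x) = v$i * partial i f x + (\<Sum>j\<in>S. v$j * partial j f x)"
       "(\<Sum>j\<in>insert i S. \<bar>v$j\<bar>) = \<bar>v$i\<bar> + (\<Sum>j\<in>S. \<bar>v$j\<bar>)" using insert by auto
    show ?case unfolding eqx sums using step IH by (simp add: abs_le_iff algebra_simps)
  qed
  have nn: "real CARD('n) > 0" by simp
  show "\<exists>d>0. \<forall>y. norm (y - x) < d \<longrightarrow> norm (f y - f x - (\<Sum>i\<in>UNIV. (y - x) $ i * partial i f x)) \<le> e * norm (y - x)"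
  proof (intro exI[of _ "d / real CARD('n)"] conjI allI impI)
    show "d / real CARD('n) > 0" using d by simp
    fix y assume y: "norm (y - x) < d / real CARD('n)"
    define v where "v = y - x"
    have l1: "(\<Sum>j\<in>UNIV. \<bar>v$j\<bar>) \<le> real CARD('n) * norm v"
      using sum_mono[of UNIV "\<lambda>j. \<bar>v$j\<bar>" "\<lambda>j. norm v"] component_le_norm_cart by auto
    have "(\<Sum>j\<in>UNIV. \<bar>v$j\<bar>) < d" using l1 y nn by (simp add: v_def field_simps)
    from claim[OF finite_class.finite_UNIV this]
    have "\<bar>f y - f x - (\<Sum>j\<in>UNIV. v$j * partial j f x)\<bar> \<le> \<eta> * (\<Sum>j\<in>UNIV. \<bar>v$j\<bar>)"
      using basis_expansion[of v] by (simp add: v_def scalar_mult_eq_scaleR)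
    also have "\<dots> \<le> \<eta> * (real CARD('n) * norm v)" using l1 eta by simp
    also have "\<dots> = e * norm v" using nn by (simp add: \<eta>_def)
    finally show "norm (f y - f x - (\<Sum>i\<in>UNIV. (y - x) $ i * partial i f x)) \<le> e * norm (y - x)"
      by (simp add: v_def)
  qed
qed

lemma line_deriv:
  fixes f :: "real^'n::finite \<Rightarrow> real"
  assumes "(f has_derivative f') (at (x + t *\<^sub>R z))"
  shows "((\<lambda>s. f (x + s *\<^sub>R z)) has_real_derivative f' z) (at t)"
proof -
  have l: "((\<lambda>s. x + s *\<^sub>R z) has_derivative (\<lambda>s. s *\<^sub>R z)) (at t)"
    by (rule derivative_eq_intros | simp)+
  have "((\<lambda>s. f (x + s *\<^sub>R z)) has_derivative (\<lambda>s. f' (s *\<^sub>R z))) (at t)"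
    using has_derivative_compose[OF l assms] by (simp add: o_def)
  moreover have "f' (s *\<^sub>R z) = s * f' z" for s
    using bounded_linear.linear[OF has_derivative_bounded_linear[OF assms]] by (simp add: linear_scale)
  ultimately show ?thesis unfolding has_field_derivative_def by (simp add: mult.commute[of _ "f' z"])
qed

lemma partial_of_frechet:
  fixes f :: "real^'n::finite \<Rightarrow> real"
  assumes "(f has_derivative f') (at x)"
  shows "partial i f x = f' (axis i 1)"
proof -
  have "((\<lambda>s. f (x + s *\<^sub>R axis i 1)) has_real_derivative f' (axis i 1)) (at 0)"
    using line_deriv[of f f' x 0 "axis i 1"] assms by simp
  then show ?thesis unfolding partial_def by (rule DERIV_imp_deriv)
qed

lemma frechet_expand:
  fixes f :: "real^'n::finite \<Rightarrow> real"
  assumes "(f has_derivative f') (at x)"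
  shows "f' v = (\<Sum>i\<in>UNIV. v $ i * partial i f x)"
proof -
  have lin: "linear f'" using has_derivative_bounded_linear[OF assms] bounded_linear.linear by blast
  have "f' v = f' (\<Sum>i\<in>UNIV. v $ i *\<^sub>R axis i 1)"
    using basis_expansion[of v] by (simp add: scalar_mult_eq_scaleR)
  also have "\<dots> = (\<Sum>i\<in>UNIV. v $ i * f' (axis i 1))"
    using lin by (simp add: linear_sum linear_scale)
  finally show ?thesis using partial_of_frechet[OF assms] by simp
qed

lemma line_deriv_partials:
  fixes f :: "real^'n::finite \<Rightarrow> real"
  assumes "(f has_derivative f') (at (x + t *\<^sub>R z))"
  shows "((\<lambda>s. f (x + s *\<^sub>R z)) has_real_derivative (\<Sum>j\<in>UNIV. z $ j * partial j f (x + t *\<^sub>R z))) (at t)"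
  using line_deriv[OF assms] frechet_expand[OF assms] by simp

lemma Ck_mono: "Ck (Suc k) f \<Longrightarrow> Ck k f"
proof (induction k arbitrary: f)
  case 0 then show ?case by simp
next
  case (Suc k) then show ?case by (metis Ck.simps(2))
qed

lemma Ck_partial: "Ck (Suc k) f \<Longrightarrow> Ck k (partial i f)"
  by simp

lemma Ck_frechet:
  fixes f :: "real^'n::finite \<Rightarrow> real"
  assumes "Ck (Suc k) f"
  shows "(f has_derivative (\<lambda>v. \<Sum>i\<in>UNIV. v $ i * partial i f x)) (at x)"
proof (rule frechet_from_partials)
  have "Ck 1 f" using assms
    by (induction k) (auto dest: Ck_mono)
  then show "\<And>i y. (\<lambda>t. f (y + t *\<^sub>R axis i 1)) differentiable (at 0)"
    "\<And>i. continuous_on UNIV (partial i f)" by auto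
qed

lemma chain_real:
  assumes "(f has_derivative f') (at x)" "(g has_real_derivative g') (at (f x))"
  shows "((\<lambda>y. g (f y)) has_derivative (\<lambda>v. g' * f' v)) (at x)"
proof -
  have "(g has_derivative (\<lambda>h. g' * h)) (at (f x))" using assms(2) by (simp add: has_field_derivative_def)
  from has_derivative_compose[OF assms(1) this] show ?thesis by simp
qed




definition Qf :: "real \<Rightarrow> real \<Rightarrow> real \<Rightarrow> real" where
  "Qf N s d = -(N/2) * ln (4*pi*d) - s/(4*d)"
definition Qf1 :: "real \<Rightarrow> real \<Rightarrow> real \<Rightarrow> real" where
  "Qf1 N s d = -(N/2)/d + s/(4*d^2)"
definition Qf2 :: "real \<Rightarrow> real \<Rightarrow> real \<Rightarrow> real" where
  "Qf2 N s d = (N/2)/d^2 - s/(2*d^3)"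

lemma Qf_deriv: assumes "d > 0" shows "((\<lambda>d. Qf N s d) has_real_derivative Qf1 N s d) (at d)"
  unfolding Qf_def Qf1_def
  apply (rule DERIV_cong)
   apply (rule derivative_eq_intros refl | (use assms in \<open>simp; fail\<close>))+
  using assms apply (auto simp: field_simps power2_eq_square)
  done

lemma Qf1_deriv: assumes "d > 0" shows "((\<lambda>d. Qf1 N s d) has_real_derivative Qf2 N s d) (at d)"
  unfolding Qf2_def Qf1_def
  apply (rule DERIV_cong)
   apply (rule derivative_eq_intros refl | (use assms in \<open>simp; fail\<close>))+
  using assms apply (auto simp: field_simps power2_eq_square power3_eq_cube)
  done
lemma qker_exp:
  fixes D :: "real^'n::finite \<Rightarrow> real"
  assumes "D y > 0"
  shows "qker D y z = exp (Qf (real CARD('n)) ((norm z)\<^sup>2) (D y))"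
proof -
  have p: "(4 * pi * D y) powr (- real CARD('n) / 2) = exp ((- real CARD('n) / 2) * ln (4 * pi * D y))"
    using assms by (simp add: powr_def)
  show ?thesis unfolding qker_def Qf_def p exp_add[symmetric]
    by (rule arg_cong[where f=exp]) simp
qed


context
  fixes D \<rho> :: "real^'n::finite \<Rightarrow> real"
  assumes DC: "Ck 2 D" and RC: "Ck 2 \<rho>" and rpos: "\<And>y. \<rho> y > 0" and Dpos: "\<And>y. D y > 0"
begin

lemma D_fr: "(D has_derivative (\<lambda>v. \<Sum>i\<in>UNIV. v$i * partial i D y)) (at y)"
  using Ck_frechet[of 1 D] DC by (simp add: numeral_2_eq_2)

lemma pD_fr: "(partial j D has_derivative (\<lambda>v. \<Sum>i\<in>UNIV. v$i * partial i (partial j D) y)) (at y)"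
  using Ck_frechet[of 0 "partial j D"] DC by (simp add: numeral_2_eq_2)

lemma R_fr: "(\<rho> has_derivative (\<lambda>v. \<Sum>i\<in>UNIV. v$i * partial i \<rho> y)) (at y)"
  using Ck_frechet[of 1 \<rho>] RC by (simp add: numeral_2_eq_2)

lemma pR_fr: "(partial j \<rho> has_derivative (\<lambda>v. \<Sum>i\<in>UNIV. v$i * partial i (partial j \<rho>) y)) (at y)"
  using Ck_frechet[of 0 "partial j \<rho>"] RC by (simp add: numeral_2_eq_2)

lemma L_fr: "((\<lambda>y. ln (\<rho> y)) has_derivative (\<lambda>v. (1 / \<rho> y) * (\<Sum>i\<in>UNIV. v$i * partial i \<rho> y))) (at y)"
  by (rule chain_real[OF R_fr DERIV_ln_divide]) (rule rpos)

lemma pL_eq: "partial j (\<lambda>y. ln (\<rho> y)) y = partial j \<rho> y / \<rho> y"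
  using partial_of_frechet[OF L_fr, of j] partial_of_frechet[OF R_fr, of j] by simp

lemma pL_fr: "\<exists>G. (partial j (\<lambda>y. ln (\<rho> y)) has_derivative G) (at y)"
proof -
  have e: "partial j (\<lambda>y. ln (\<rho> y)) = (\<lambda>y. partial j \<rho> y / \<rho> y)" using pL_eq by auto
  show ?thesis unfolding e using has_derivative_divide'[OF pR_fr R_fr, of y] rpos[of y] by auto
qed

lemma h_deriv: "((\<lambda>t. D (x + t *\<^sub>R z)) has_real_derivative (\<Sum>j\<in>UNIV. z$j * partial j D (x + t *\<^sub>R z))) (at t)"
  by (rule line_deriv_partials[OF D_fr])

lemma H1_deriv: "((\<lambda>t. \<Sum>j\<in>UNIV. z$j * partial j D (x + t *\<^sub>R z)) has_real_derivative
    (\<Sum>j\<in>UNIV. z$j * (\<Sum>i\<in>UNIV. z$i * partial i (partial j D) (x + t *\<^sub>R z)))) (at t)"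
  by (intro DERIV_sum DERIV_cmult line_deriv_partials[OF pD_fr])

lemma r_deriv: "((\<lambda>t. ln (\<rho> (x + t *\<^sub>R z))) has_real_derivative (\<Sum>j\<in>UNIV. z$j * partial j (\<lambda>y. ln (\<rho> y)) (x + t *\<^sub>R z))) (at t)"
  using line_deriv_partials[OF L_fr] by simp

lemma R1_deriv: "((\<lambda>t. \<Sum>j\<in>UNIV. z$j * partial j (\<lambda>y. ln (\<rho> y)) (x + t *\<^sub>R z)) has_real_derivative
    (\<Sum>j\<in>UNIV. z$j * (\<Sum>i\<in>UNIV. z$i * partial i (partial j (\<lambda>y. ln (\<rho> y))) (x + t *\<^sub>R z)))) (at t)"
proof (intro DERIV_sum DERIV_cmult)
  fix j
  obtain G where "(partial j (\<lambda>y. ln (\<rho> y)) has_derivative G) (at (x + t *\<^sub>R z))" using pL_fr by blast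
  from line_deriv_partials[OF this] show "((\<lambda>t. partial j (\<lambda>y. ln (\<rho> y)) (x + t *\<^sub>R z)) has_real_derivative
      (\<Sum>i\<in>UNIV. z$i * partial i (partial j (\<lambda>y. ln (\<rho> y))) (x + t *\<^sub>R z))) (at t)" .
qed

lemma sum_axis: "(\<Sum>k\<in>UNIV. axis i (1::real) $ k * c k) = c i"
proof -
  have "\<And>k. axis i (1::real) $ k * c k = (if k = i then c i else 0)" by (simp add: axis_def)
  then show ?thesis by simp
qed

lemma alpha_eq:
  "alpha D \<rho> x z \<epsilon> = min 1 (exp ((Qf (real CARD('n)) ((norm z)\<^sup>2) (D (x + \<epsilon> *\<^sub>R z)) + ln (\<rho> (x + \<epsilon> *\<^sub>R z)))
      - (Qf (real CARD('n)) ((norm z)\<^sup>2) (D x) + ln (\<rho> x))))"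
proof -
  have "qker D (x + \<epsilon> *\<^sub>R z) z * \<rho> (x + \<epsilon> *\<^sub>R z) / (qker D x z * \<rho> x)
      = exp ((Qf (real CARD('n)) ((norm z)\<^sup>2) (D (x + \<epsilon> *\<^sub>R z)) + ln (\<rho> (x + \<epsilon> *\<^sub>R z)))
      - (Qf (real CARD('n)) ((norm z)\<^sup>2) (D x) + ln (\<rho> x)))"
    unfolding qker_exp[of D, OF Dpos] exp_diff exp_add using rpos by simp
  then show ?thesis unfolding alpha_def by simp
qed

lemma beta_eq:
  "beta D \<rho> x z \<epsilon> = min 1 (exp (\<epsilon> * (Qf1 (real CARD('n)) ((norm z)\<^sup>2) (D x) * (\<Sum>j\<in>UNIV. z$j * partial j D x)
      + (\<Sum>j\<in>UNIV. z$j * partial j (\<lambda>y. ln (\<rho> y)) x))))"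
proof -
  define N where "N = real CARD('n)"
  define s where "s = (norm z)\<^sup>2"
  have qe: "(\<lambda>y. qker D y z) = (\<lambda>y. exp (Qf N s (D y)))"
    using qker_exp[of D, OF Dpos] by (auto simp: N_def s_def)
  have dq: "((\<lambda>d. exp (Qf N s d)) has_real_derivative exp (Qf N s (D x)) * Qf1 N s (D x)) (at (D x))"
    by (rule DERIV_chain2[OF DERIV_exp Qf_deriv[OF Dpos]])
  have pq: "partial i (\<lambda>y. qker D y z) x = exp (Qf N s (D x)) * Qf1 N s (D x) * partial i D x" for i
    unfolding qe using partial_of_frechet[OF chain_real[OF D_fr dq], of i] by (simp add: sum_axis)
  have g1: "(grad (\<lambda>y. qker D y z) x \<bullet> z) / qker D x z = Qf1 N s (D x) * (\<Sum>j\<in>UNIV. z$j * partial j D x)"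
  proof -
    have "(grad (\<lambda>y. qker D y z) x \<bullet> z) / qker D x z =
       (\<Sum>i\<in>UNIV. (exp (Qf N s (D x)) * Qf1 N s (D x) * partial i D x) * z$i) / exp (Qf N s (D x))"
      unfolding grad_def inner_vec_def using qker_exp[of D x z, OF Dpos] by (simp add: pq N_def s_def)
    also have "\<dots> = (\<Sum>i\<in>UNIV. (exp (Qf N s (D x)) * Qf1 N s (D x) * partial i D x) * z$i / exp (Qf N s (D x)))"
      by (rule sum_divide_distrib)
    also have "\<dots> = (\<Sum>i\<in>UNIV. Qf1 N s (D x) * (z$i * partial i D x))"
      by (rule sum.cong) auto
    finally show ?thesis by (simp add: sum_distrib_left)
  qed
  have g2: "(grad \<rho> x \<bullet> z) / \<rho> x = (\<Sum>j\<in>UNIV. z$j * partial j (\<lambda>y. ln (\<rho> y)) x)"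
    unfolding grad_def inner_vec_def pL_eq
    by (simp add: sum_divide_distrib mult_ac)
  show ?thesis unfolding beta_def g1 g2 N_def s_def by (simp add: distrib_left)
qed

end


lemma taylor2:
  fixes \<phi> \<phi>1 \<phi>2 :: "real \<Rightarrow> real"
  assumes d1: "\<And>t. (\<phi> has_real_derivative \<phi>1 t) (at t)"
    and d2: "\<And>t. (\<phi>1 has_real_derivative \<phi>2 t) (at t)"
    and b: "\<And>t. \<bar>\<phi>2 t\<bar> \<le> M" and e: "0 \<le> \<epsilon>"
  shows "\<bar>\<phi> \<epsilon> - \<phi> 0 - \<epsilon> * \<phi>1 0\<bar> \<le> M * \<epsilon>\<^sup>2"
proof -
  have b1: "\<bar>\<phi>1 t - \<phi>1 0\<bar> \<le> M * \<epsilon>" if t: "0 \<le> t" "t \<le> \<epsilon>" for t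
  proof -
    have "\<bar>\<phi>1 t - \<phi>1 0\<bar> \<le> M * \<bar>t - 0\<bar>"
      by (rule mvt_bound[where g'=\<phi>2]) (use d2 b in auto)
    also have "\<dots> \<le> M * \<epsilon>" using t b[of 0] by (intro mult_left_mono) auto
    finally show ?thesis .
  qed
  have "\<bar>(\<phi> \<epsilon> - \<epsilon> * \<phi>1 0) - (\<phi> 0 - 0 * \<phi>1 0)\<bar> \<le> (M * \<epsilon>) * \<bar>\<epsilon> - 0\<bar>"
  proof (rule mvt_bound[where g'="\<lambda>t. \<phi>1 t - \<phi>1 0"])
    fix t show "((\<lambda>t. \<phi> t - t * \<phi>1 0) has_real_derivative \<phi>1 t - \<phi>1 0) (at t)"
      by (rule derivative_eq_intros d1 refl | simp)+
  next
    fix t assume "min 0 \<epsilon> \<le> t" "t \<le> max 0 \<epsilon>"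
    then show "\<bar>\<phi>1 t - \<phi>1 0\<bar> \<le> M * \<epsilon>" using b1 e by auto
  qed
  then show ?thesis using e by (simp add: power2_eq_square mult_ac)
qed

lemma minexp_lip: fixes a b :: real shows "\<bar>min 1 (exp a) - min 1 (exp b)\<bar> \<le> \<bar>a - b\<bar>"
proof -
  have key: "min 1 (exp a) - min 1 (exp b) \<le> \<bar>a - b\<bar>" for a b :: real
  proof (cases "a \<le> 0")
    case True
    then have "min 1 (exp a) = exp a" by simp
    moreover have "exp a - min 1 (exp b) \<le> \<bar>a - b\<bar>"
    proof (cases "b \<le> 0")
      case True
      have "exp (b - a) \<ge> 1 + (b - a)" by (rule exp_ge_add_one_self)
      then have "exp b \<ge> exp a * (1 + (b - a))" by (simp add: exp_diff field_simps)
      then have "exp a - exp b \<le> exp a * (a - b)" by (simp add: algebra_simps)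
      also have "\<dots> \<le> \<bar>a - b\<bar>"
      proof (cases "a \<le> b")
        case True
        have "exp a * (a - b) \<le> 0" using True by (simp add: mult_nonneg_nonpos)
        then show ?thesis by linarith
      next
        case False
        then have "exp a * (a - b) \<le> 1 * (a - b)" using \<open>a \<le> 0\<close> by (intro mult_right_mono) auto
        then show ?thesis by simp
      qed
      finally show ?thesis using True by simp
    next
      case False
      have "exp a \<le> 1" using \<open>a \<le> 0\<close> by simp
      moreover have "min 1 (exp b) = 1" using False by simp
      ultimately show ?thesis using False \<open>a \<le> 0\<close> by linarith
    qed
    ultimately show ?thesis by simp
  next
    case False
    then have "min 1 (exp a) = 1" by simp
    moreover have "1 - min 1 (exp b) \<le> \<bar>a - b\<bar>"
    proof (cases "b \<le> 0")
      case True
      have "exp b \<ge> 1 + b" using exp_ge_add_one_self by simp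
      moreover have "min 1 (exp b) = exp b" using True by simp
      ultimately show ?thesis using True False by linarith
    next
      case False then show ?thesis by simp
    qed
    ultimately show ?thesis by simp
  qed
  show ?thesis using key[of a b] key[of b a] by (simp add: abs_le_iff abs_minus_commute)
qed

lemma sum_bound1:
  fixes z :: "real^'n::finite"
  assumes "\<And>j. \<bar>a j\<bar> \<le> B"
  shows "\<bar>\<Sum>j\<in>UNIV. z$j * a j\<bar> \<le> real CARD('n) * (norm z * B)"
proof -
  have "\<bar>\<Sum>j\<in>UNIV. z$j * a j\<bar> \<le> (\<Sum>j\<in>UNIV. \<bar>z$j * a j\<bar>)" by (rule sum_abs)
  also have "\<dots> \<le> (\<Sum>j::'n\<in>UNIV. norm z * B)"
  proof (rule sum_mono)
    fix j
    have "\<bar>z$j\<bar> * \<bar>a j\<bar> \<le> norm z * B" by (rule mult_mono[OF component_le_norm_cart assms]) auto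
    then show "\<bar>z$j * a j\<bar> \<le> norm z * B" by (simp add: abs_mult)
  qed
  finally show ?thesis by simp
qed

lemma Qf1_bound:
  assumes "0 < c" "c \<le> d" "0 \<le> N" "0 \<le> s"
  shows "\<bar>Qf1 N s d\<bar> \<le> N/(2*c) + s/(4*c^2)"
proof -
  have "\<bar>Qf1 N s d\<bar> \<le> N/(2*d) + s/(4*d^2)" unfolding Qf1_def using assms by (simp add: abs_le_iff)
  also have "N/(2*d) \<le> N/(2*c)" using assms by (intro divide_left_mono) auto
  also have "s/(4*d^2) \<le> s/(4*c^2)" using assms by (intro divide_left_mono mult_left_mono power_mono) auto
  finally show ?thesis by simp
qed

lemma Qf2_bound:
  assumes "0 < c" "c \<le> d" "0 \<le> N" "0 \<le> s"
  shows "\<bar>Qf2 N s d\<bar> \<le> N/(2*c^2) + s/(2*c^3)"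
proof -
  have "\<bar>Qf2 N s d\<bar> \<le> N/(2*d^2) + s/(2*d^3)" unfolding Qf2_def using assms by (simp add: abs_le_iff)
  also have "N/(2*d^2) \<le> N/(2*c^2)" using assms by (intro divide_left_mono mult_left_mono power_mono) auto
  also have "s/(2*d^3) \<le> s/(2*c^3)" using assms by (intro divide_left_mono mult_left_mono power_mono) auto
  finally show ?thesis by simp
qed

definition Mcst :: "real \<Rightarrow> real \<Rightarrow> real \<Rightarrow> real" where
  "Mcst N B c = (N/(2*c^2) + 1/(2*c^3)) * (N^2*B^2) + (N/(2*c) + 1/(4*c^2)) * (N^2*B) + N^2*B"

lemma final_arith:
  fixes u N B c q1 q2 h1 h2 r2 :: real
  assumes "0 \<le> u" "0 \<le> N" "0 \<le> B" "0 < c"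
    and q2: "\<bar>q2\<bar> \<le> N/(2*c^2) + u^2/(2*c^3)" and q1: "\<bar>q1\<bar> \<le> N/(2*c) + u^2/(4*c^2)"
    and h1: "\<bar>h1\<bar> \<le> N * (u * B)" and h2: "\<bar>h2\<bar> \<le> N * (u * (N * (u * B)))"
    and r2: "\<bar>r2\<bar> \<le> N * (u * (N * (u * B)))"
  shows "\<bar>q2 * h1^2 + q1 * h2 + r2\<bar> \<le> Mcst N B c * (1 + u)^4"
proof -
  define P where "P = (1 + u)^4"
  have u2: "u^2 \<le> P"
  proof -
    have "u^2 \<le> (1+u)^2" using assms by (intro power_mono) auto
    also have "\<dots> \<le> (1+u)^4" using assms by (intro power_increasing) auto
    finally show ?thesis unfolding P_def .
  qed
  have u4: "u^4 \<le> P" unfolding P_def using assms by (intro power_mono) auto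
  have Q2b: "0 \<le> N/(2*c^2) + u^2/(2*c^3)" using q2 abs_ge_zero order_trans by blast
  have Q1b: "0 \<le> N/(2*c) + u^2/(4*c^2)" using q1 abs_ge_zero order_trans by blast
  have hs: "\<bar>h1\<bar>^2 \<le> (N*(u*B))^2" by (rule power_mono[OF h1 abs_ge_zero])
  have a1: "\<bar>q2 * h1^2\<bar> \<le> (N/(2*c^2) + u^2/(2*c^3)) * (N^2*B^2*u^2)"
  proof -
    have "\<bar>q2\<bar> * \<bar>h1\<bar>^2 \<le> (N/(2*c^2) + u^2/(2*c^3)) * (N*(u*B))^2"
      by (rule mult_mono[OF q2 hs Q2b]) simp
    moreover have "\<bar>q2 * h1^2\<bar> = \<bar>q2\<bar> * \<bar>h1\<bar>^2" by (simp add: abs_mult)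
    moreover have "(N*(u*B))^2 = N^2*B^2*u^2" by (simp add: power_mult_distrib)
    ultimately show ?thesis by simp
  qed
  have a2: "\<bar>q1 * h2\<bar> \<le> (N/(2*c) + u^2/(4*c^2)) * (N^2*B*u^2)"
  proof -
    have "\<bar>q1\<bar> * \<bar>h2\<bar> \<le> (N/(2*c) + u^2/(4*c^2)) * (N * (u * (N * (u * B))))"
      by (rule mult_mono[OF q1 h2 Q1b]) simp
    moreover have "\<bar>q1 * h2\<bar> = \<bar>q1\<bar> * \<bar>h2\<bar>" by (simp add: abs_mult)
    moreover have "N * (u * (N * (u * B))) = N^2*B*u^2" by (simp add: power2_eq_square)
    ultimately show ?thesis by simp
  qed
  have a3: "\<bar>r2\<bar> \<le> N^2*B*u^2"
  proof -
    have "N * (u * (N * (u * B))) = N^2*B*u^2" by (simp add: power2_eq_square)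
    then show ?thesis using r2 by (simp only:)
  qed
  have t1: "(N/(2*c^2) + u^2/(2*c^3)) * (N^2*B^2*u^2) \<le> (N/(2*c^2) + 1/(2*c^3)) * (N^2*B^2) * P"
  proof -
    have "(N/(2*c^2) + u^2/(2*c^3)) * (N^2*B^2*u^2) = (N/(2*c^2)) * (N^2*B^2) * u^2 + (1/(2*c^3)) * (N^2*B^2) * u^4"
      by (simp add: field_simps power2_eq_square power4_eq_xxxx)
    also have "\<dots> \<le> (N/(2*c^2)) * (N^2*B^2) * P + (1/(2*c^3)) * (N^2*B^2) * P"
      using u2 u4 assms by (intro add_mono mult_left_mono) auto
    finally show ?thesis by (simp add: distrib_right)
  qed
  have t2: "(N/(2*c) + u^2/(4*c^2)) * (N^2*B*u^2) \<le> (N/(2*c) + 1/(4*c^2)) * (N^2*B) * P"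
  proof -
    have "(N/(2*c) + u^2/(4*c^2)) * (N^2*B*u^2) = (N/(2*c)) * (N^2*B) * u^2 + (1/(4*c^2)) * (N^2*B) * u^4"
      by (simp add: field_simps power2_eq_square power4_eq_xxxx)
    also have "\<dots> \<le> (N/(2*c)) * (N^2*B) * P + (1/(4*c^2)) * (N^2*B) * P"
      using u2 u4 assms by (intro add_mono mult_left_mono) auto
    finally show ?thesis by (simp add: distrib_right)
  qed
  have t3: "N^2*B*u^2 \<le> N^2*B*P" using u2 assms by (intro mult_left_mono) auto
  have "\<bar>q2 * h1^2 + q1 * h2 + r2\<bar> \<le> \<bar>q2 * h1^2\<bar> + \<bar>q1 * h2\<bar> + \<bar>r2\<bar>" by linarith
  also have "\<dots> \<le> Mcst N B c * P"
  proof -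
    have "Mcst N B c * P = (N/(2*c^2) + 1/(2*c^3)) * (N^2*B^2) * P + (N/(2*c) + 1/(4*c^2)) * (N^2*B) * P + N^2*B*P"
      unfolding Mcst_def by (simp add: distrib_right)
    then show ?thesis using a1 a2 a3 t1 t2 t3 by linarith
  qed
  finally show ?thesis by (simp add: P_def)
qed



context
  fixes D \<rho> :: "real^'n::finite \<Rightarrow> real"
  assumes DC: "Ck 2 D" and RC: "Ck 2 \<rho>" and rpos: "\<And>y. \<rho> y > 0" and Dpos: "\<And>y. D y > 0"
begin

lemma pointwise:
  fixes x z :: "real^'n" and c B \<epsilon> :: real
  assumes c: "c > 0" "\<And>y. c \<le> D y"
   and B1: "\<And>y i. \<bar>partial i D y\<bar> \<le> B" and B2: "\<And>y i j. \<bar>partial i (partial j D) y\<bar> \<le> B"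
   and B3: "\<And>y i j. \<bar>partial i (partial j (\<lambda>y. ln (\<rho> y))) y\<bar> \<le> B"
   and e: "0 \<le> \<epsilon>"
  shows "\<bar>alpha D \<rho> x z \<epsilon> - beta D \<rho> x z \<epsilon>\<bar> \<le> Mcst (real CARD('n)) B c * (1 + norm z)^4 * \<epsilon>\<^sup>2"
proof -
  define N where "N = real CARD('n)"
  define s where "s = (norm z)^2"
  define H1 where "H1 t = (\<Sum>j\<in>UNIV. z$j * partial j D (x + t *\<^sub>R z))" for t
  define H2 where "H2 t = (\<Sum>j\<in>UNIV. z$j * (\<Sum>i\<in>UNIV. z$i * partial i (partial j D) (x + t *\<^sub>R z)))" for t
  define R1 where "R1 t = (\<Sum>j\<in>UNIV. z$j * partial j (\<lambda>y. ln (\<rho> y)) (x + t *\<^sub>R z))" for t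
  define R2 where "R2 t = (\<Sum>j\<in>UNIV. z$j * (\<Sum>i\<in>UNIV. z$i * partial i (partial j (\<lambda>y. ln (\<rho> y))) (x + t *\<^sub>R z)))" for t
  define \<phi> where "\<phi> t = Qf N s (D (x + t *\<^sub>R z)) + ln (\<rho> (x + t *\<^sub>R z))" for t
  define \<phi>1 where "\<phi>1 t = Qf1 N s (D (x + t *\<^sub>R z)) * H1 t + R1 t" for t
  define \<phi>2 where "\<phi>2 t = Qf2 N s (D (x + t *\<^sub>R z)) * (H1 t)^2 + Qf1 N s (D (x + t *\<^sub>R z)) * H2 t + R2 t" for t
  have hd: "\<And>t. ((\<lambda>t. D (x + t *\<^sub>R z)) has_real_derivative H1 t) (at t)"
    unfolding H1_def by (rule h_deriv[OF DC RC rpos Dpos])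
  have H1d: "\<And>t. (H1 has_real_derivative H2 t) (at t)"
    unfolding H1_def[abs_def] H2_def by (rule H1_deriv[OF DC RC rpos Dpos])
  have rd: "\<And>t. ((\<lambda>t. ln (\<rho> (x + t *\<^sub>R z))) has_real_derivative R1 t) (at t)"
    unfolding R1_def by (rule r_deriv[OF DC RC rpos Dpos])
  have R1d: "\<And>t. (R1 has_real_derivative R2 t) (at t)"
    unfolding R1_def[abs_def] R2_def by (rule R1_deriv[OF DC RC rpos Dpos])
  have d1: "(\<phi> has_real_derivative \<phi>1 t) (at t)" for t
    unfolding \<phi>_def[abs_def] \<phi>1_def
    by (intro DERIV_add DERIV_chain2[OF Qf_deriv[OF Dpos] hd] rd)
  have d2: "(\<phi>1 has_real_derivative \<phi>2 t) (at t)" for t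
  proof -
    have "(\<phi>1 has_real_derivative (Qf2 N s (D (x + t *\<^sub>R z)) * H1 t) * H1 t + H2 t * Qf1 N s (D (x + t *\<^sub>R z)) + R2 t) (at t)"
      unfolding \<phi>1_def[abs_def]
      by (intro DERIV_add DERIV_mult DERIV_chain2[OF Qf1_deriv[OF Dpos] hd] H1d R1d)
    then show ?thesis unfolding \<phi>2_def by (simp add: power2_eq_square mult_ac)
  qed
  have B0: "0 \<le> B" using B1 abs_ge_zero order_trans by blast
  have bd: "\<bar>\<phi>2 t\<bar> \<le> Mcst N B c * (1 + norm z)^4" for t
    unfolding \<phi>2_def
  proof (rule final_arith)
    show "0 \<le> norm z" "0 \<le> N" "0 \<le> B" "0 < c" using B0 c by (auto simp: N_def)
    show "\<bar>Qf2 N s (D (x + t *\<^sub>R z))\<bar> \<le> N / (2 * c\<^sup>2) + (norm z)\<^sup>2 / (2 * c ^ 3)"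
      unfolding s_def by (rule Qf2_bound) (use c in \<open>auto simp: N_def\<close>)
    show "\<bar>Qf1 N s (D (x + t *\<^sub>R z))\<bar> \<le> N / (2 * c) + (norm z)\<^sup>2 / (4 * c\<^sup>2)"
      unfolding s_def by (rule Qf1_bound) (use c in \<open>auto simp: N_def\<close>)
    show "\<bar>H1 t\<bar> \<le> N * (norm z * B)" unfolding H1_def N_def by (rule sum_bound1[OF B1])
    show "\<bar>H2 t\<bar> \<le> N * (norm z * (N * (norm z * B)))" unfolding H2_def N_def
      by (rule sum_bound1) (rule sum_bound1[OF B2])
    show "\<bar>R2 t\<bar> \<le> N * (norm z * (N * (norm z * B)))" unfolding R2_def N_def
      by (rule sum_bound1) (rule sum_bound1[OF B3])
  qed
  have tay: "\<bar>\<phi> \<epsilon> - \<phi> 0 - \<epsilon> * \<phi>1 0\<bar> \<le> Mcst N B c * (1 + norm z)^4 * \<epsilon>\<^sup>2"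
    by (rule taylor2[OF d1 d2 bd e])
  have ae: "alpha D \<rho> x z \<epsilon> = min 1 (exp (\<phi> \<epsilon> - \<phi> 0))"
    unfolding alpha_eq[OF DC RC rpos Dpos] \<phi>_def N_def s_def by simp
  have be: "beta D \<rho> x z \<epsilon> = min 1 (exp (\<epsilon> * \<phi>1 0))"
    unfolding beta_eq[OF DC RC rpos Dpos] \<phi>1_def H1_def R1_def N_def s_def by simp
  show ?thesis unfolding ae be using minexp_lip[of "\<phi> \<epsilon> - \<phi> 0" "\<epsilon> * \<phi>1 0"] tay
    by (simp add: N_def)
qed

end


lemma nd_exp:
  assumes "d > 0"
  shows "normal_density 0 (sqrt (2*d)) t = exp (- (1/2) * ln (4*pi*d) - t^2/(4*d))"
proof -
  have s: "(sqrt (2*d))\<^sup>2 = 2*d" using assms by simp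
  have a: "1 / sqrt (4*pi*d) = exp (- (1/2) * ln (4*pi*d))"
    using assms by (simp add: exp_minus ln_sqrt[symmetric] inverse_eq_divide)
  have b: "normal_density 0 (sqrt (2*d)) t = (1 / sqrt (4*pi*d)) * exp (- (t^2)/(4*d))"
    unfolding normal_density_def s by (simp add: mult_ac)
  show ?thesis unfolding b a exp_add[symmetric] by simp
qed

lemma q_prod:
  fixes D :: "real^'n::finite \<Rightarrow> real"
  assumes "D x > 0"
  shows "qker D x z = (\<Prod>b\<in>Basis. normal_density 0 (sqrt (2 * D x)) (z \<bullet> b))"
proof -
  have "(\<Prod>b\<in>Basis. normal_density 0 (sqrt (2 * D x)) (z \<bullet> b)) =
      exp (\<Sum>b\<in>Basis. - (1/2) * ln (4*pi*D x) - (z \<bullet> b)^2/(4*D x))"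
    unfolding nd_exp[OF assms] exp_sum[OF finite_Basis] ..
  also have "(\<Sum>b\<in>Basis. - (1/2) * ln (4*pi*D x) - (z \<bullet> b)^2/(4*D x)) =
      - (real CARD('n)/2) * ln (4*pi*D x) - (norm z)^2/(4*D x)"
  proof -
    have "(norm z)^2 = (\<Sum>b\<in>Basis. (z \<bullet> b)^2)"
      unfolding power2_norm_eq_inner by (subst euclidean_inner) (simp add: power2_eq_square)
    moreover have "(\<Sum>b\<in>Basis. - (1/2) * ln (4*pi*D x) - (z \<bullet> b)^2/(4*D x)) =
       (\<Sum>b\<in>(Basis::(real^'n) set). - (1/2) * ln (4*pi*D x)) - (\<Sum>b\<in>Basis. (z \<bullet> b)^2)/(4*D x)"
      by (simp only: sum_subtractf sum_divide_distrib)
    moreover have "(\<Sum>b\<in>(Basis::(real^'n) set). - (1/2) * ln (4*pi*D x)) = - (real CARD('n)/2) * ln (4*pi*D x)"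
      by simp
    ultimately show ?thesis by simp
  qed
  finally show ?thesis using qker_exp[of D x z, OF assms] unfolding Qf_def by simp
qed

lemma gauss_int:
  assumes "d > 0"
  shows "has_bochner_integral lborel
     (\<lambda>z::real^'n::finite. \<Prod>b\<in>Basis. normal_density 0 (sqrt (2*d)) (z \<bullet> b) * (1 + (z \<bullet> b)^(2*k)))
     ((1 + fact (2 * k) / ((2 / (sqrt (2*d))\<^sup>2)^k * fact k)) ^ CARD('n))"
proof -
  define \<sigma> where "\<sigma> = sqrt (2*d)"
  define W where "W = 1 + fact (2 * k) / ((2 / \<sigma>\<^sup>2)^k * fact k)"
  define w where "w t = normal_density 0 \<sigma> t * (1 + t^(2*k))" for t :: real
  have sp: "\<sigma> > 0" using assms by (simp add: \<sigma>_def)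
  have W0: "0 \<le> W" unfolding W_def using sp by (intro add_nonneg_nonneg divide_nonneg_nonneg) auto
  have hw: "has_bochner_integral lborel w W"
  proof -
    have "has_bochner_integral lborel (\<lambda>x. normal_density 0 \<sigma> x * (x - 0) ^ (2 * 0) + normal_density 0 \<sigma> x * (x - 0) ^ (2 * k))
      (fact (2 * 0) / ((2 / \<sigma>\<^sup>2)^0 * fact 0) + fact (2 * k) / ((2 / \<sigma>\<^sup>2)^k * fact k))"
      by (intro has_bochner_integral_add normal_moment_even sp)
    then show ?thesis unfolding w_def W_def by (simp add: distrib_left)
  qed
  have wm: "w \<in> borel_measurable borel" unfolding w_def normal_density_def by measurable
  have wnn: "0 \<le> w t" for t unfolding w_def by (intro mult_nonneg_nonneg normal_density_nonneg) auto
  have nw: "(\<integral>\<^sup>+t. ennreal (w t) \<partial>lborel) = ennreal W"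
    using nn_integral_eq_integral[OF integrable.intros[OF hw] ] hw wnn
    by (simp add: has_bochner_integral_integral_eq)
  have "(\<integral>\<^sup>+z. (\<Prod>b\<in>(Basis::(real^'n) set). ennreal (w (z \<bullet> b))) \<partial>lborel) = (\<Prod>b\<in>(Basis::(real^'n) set). (\<integral>\<^sup>+t. ennreal (w t) \<partial>lborel))"
    by (rule nn_integral_lborel_prod) (use wm in auto)
  also have "\<dots> = ennreal (W ^ CARD('n))" unfolding nw using W0 by (simp add: prod_ennreal ennreal_power)
  finally have "(\<integral>\<^sup>+z. ennreal (\<Prod>b\<in>(Basis::(real^'n) set). w (z \<bullet> b)) \<partial>lborel) = ennreal (W ^ CARD('n))"
    using wnn by (simp add: prod_ennreal)
  then have "has_bochner_integral lborel (\<lambda>z::real^'n. \<Prod>b\<in>Basis. w (z \<bullet> b)) (W ^ CARD('n))"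
    by (intro has_bochner_integral_nn_integral) (use wm wnn W0 in \<open>auto intro!: prod_nonneg\<close>)
  then show ?thesis unfolding w_def W_def \<sigma>_def .
qed

lemma poly_bound:
  fixes g :: "real^'n::finite \<Rightarrow> real"
  assumes "polynomial_fun g"
  shows "\<exists>C m. 0 \<le> C \<and> (\<forall>z. \<bar>g z\<bar> \<le> C * (1 + norm z)^m)"
proof -
  obtain A c where A: "finite A" and g: "\<And>x. g x = (\<Sum>a\<in>A. c a * (\<Prod>i\<in>UNIV. (x $ i) ^ (a i)))"
    using assms unfolding polynomial_fun_def by blast
  define m where "m = (\<Sum>a\<in>A. \<Sum>i\<in>UNIV. a i)"
  define C where "C = (\<Sum>a\<in>A. \<bar>c a\<bar>)"
  have "\<bar>g z\<bar> \<le> C * (1 + norm z)^m" for z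
  proof -
    have mono: "\<bar>\<Prod>i\<in>UNIV. (z $ i) ^ (a i)\<bar> \<le> (1 + norm z)^m" if a: "a \<in> A" for a
    proof -
      have "\<bar>\<Prod>i\<in>UNIV. (z $ i) ^ (a i)\<bar> = (\<Prod>i\<in>UNIV. \<bar>z $ i\<bar> ^ (a i))"
        by (simp add: abs_prod power_abs)
      also have "\<dots> \<le> (\<Prod>i\<in>UNIV. (1 + norm z) ^ (a i))"
        by (intro prod_mono conjI power_mono) (auto intro: order_trans[OF component_le_norm_cart])
      also have "\<dots> = (1 + norm z) ^ (\<Sum>i\<in>UNIV. a i)" by (simp add: power_sum)
      also have "\<dots> \<le> (1 + norm z)^m"
        unfolding m_def by (intro power_increasing member_le_sum[OF a]) (auto simp: A)
      finally show ?thesis .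
    qed
    have "\<bar>g z\<bar> \<le> (\<Sum>a\<in>A. \<bar>c a * (\<Prod>i\<in>UNIV. (z $ i) ^ (a i))\<bar>)" unfolding g by (rule sum_abs)
    also have "\<dots> \<le> (\<Sum>a\<in>A. \<bar>c a\<bar> * (1 + norm z)^m)"
      by (intro sum_mono) (auto simp: abs_mult intro!: mult_left_mono mono)
    also have "\<dots> = C * (1 + norm z)^m" by (simp add: C_def sum_distrib_right)
    finally show ?thesis .
  qed
  moreover have "0 \<le> C" by (simp add: C_def sum_nonneg)
  ultimately show ?thesis by blast
qed

lemma one_plus_sum_le_prod:
  fixes f :: "'a \<Rightarrow> real"
  assumes "finite S" "\<And>i. 0 \<le> f i"
  shows "1 + sum f S \<le> (\<Prod>i\<in>S. 1 + f i)"
  using assms(1)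
proof (induction S rule: finite_induct)
  case empty then show ?case by simp
next
  case (insert i S)
  have p1: "1 \<le> (\<Prod>i\<in>S. 1 + f i)" using assms(2) by (intro prod_ge_1) auto
  have "1 + sum f (insert i S) = f i + (1 + sum f S)" using insert by simp
  also have "\<dots> \<le> f i * (\<Prod>i\<in>S. 1 + f i) + (\<Prod>i\<in>S. 1 + f i)"
    using insert p1 assms(2)[of i] by (intro add_mono) (auto intro: mult_le_cancel_left1[THEN iffD2])
  also have "\<dots> = (\<Prod>i\<in>insert i S. 1 + f i)" using insert by (simp add: algebra_simps)
  finally show ?case .
qed

lemma pow_split: 
  fixes a :: real assumes "0 \<le> a"
  shows "(1 + a)^(2*k) \<le> 4^k * (1 + a^(2*k))"
proof -
  have "1 + a \<le> 2 * max 1 a" by auto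
  then have "(1 + a)^(2*k) \<le> (2 * max 1 a)^(2*k)" using assms by (intro power_mono) auto
  also have "\<dots> = 4^k * (max 1 a)^(2*k)" by (simp add: power_mult_distrib power_mult)
  also have "(max 1 a)^(2*k) \<le> 1 + a^(2*k)" by (cases "a \<le> 1") (auto simp: max_def)
  finally show ?thesis by simp
qed

lemma norm_pow_bound:
  fixes z :: "real^'n::finite"
  shows "(1 + norm z)^(2*k) \<le> 4^(k * CARD('n)) * (\<Prod>b\<in>Basis. 1 + (z \<bullet> b)^(2*k))"
proof -
  have "1 + norm z \<le> 1 + (\<Sum>b\<in>Basis. \<bar>z \<bullet> b\<bar>)" using norm_le_l1[of z] by simp
  also have "\<dots> \<le> (\<Prod>b\<in>Basis. 1 + \<bar>z \<bullet> b\<bar>)" by (rule one_plus_sum_le_prod) auto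
  finally have "(1 + norm z)^(2*k) \<le> (\<Prod>b\<in>Basis. 1 + \<bar>z \<bullet> b\<bar>)^(2*k)"
    by (intro power_mono) auto
  also have "\<dots> = (\<Prod>b\<in>Basis. (1 + \<bar>z \<bullet> b\<bar>)^(2*k))" by (simp add: prod_power_distrib)
  also have "\<dots> \<le> (\<Prod>b\<in>(Basis::(real^'n) set). 4^k * (1 + (z \<bullet> b)^(2*k)))"
  proof (intro prod_mono conjI)
    fix b :: "real^'n"
    show "0 \<le> (1 + \<bar>z \<bullet> b\<bar>)^(2*k)" by simp
    have "\<bar>z \<bullet> b\<bar>^(2*k) = (z \<bullet> b)^(2*k)" by (simp add: power_even_abs)
    then show "(1 + \<bar>z \<bullet> b\<bar>)^(2*k) \<le> 4^k * (1 + (z \<bullet> b)^(2*k))"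
      using pow_split[of "\<bar>z \<bullet> b\<bar>" k] by simp
  qed
  also have "\<dots> = 4^(k * CARD('n)) * (\<Prod>b\<in>Basis. 1 + (z \<bullet> b)^(2*k))"
    by (simp add: prod.distrib power_mult)
  finally show ?thesis .
qed

lemma fin_bound:
  fixes f :: "'i::finite \<Rightarrow> 'a \<Rightarrow> real"
  assumes "\<And>i. \<exists>b. \<forall>y. \<bar>f i y\<bar> \<le> b"
  shows "\<exists>B. \<forall>i y. \<bar>f i y\<bar> \<le> B"
proof -
  obtain b where b: "\<And>i y. \<bar>f i y\<bar> \<le> b i" using assms by metis
  have "\<bar>f i y\<bar> \<le> (\<Sum>j\<in>UNIV. \<bar>b j\<bar>)" for i y
    using b[of i y] member_le_sum[of i UNIV "\<lambda>j. \<bar>b j\<bar>"] by auto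
  then show ?thesis by blast
qed



context
  fixes D \<rho> :: "real^'n::finite \<Rightarrow> real"
  assumes DC: "Ck 2 D" and RC: "Ck 2 \<rho>" and rpos: "\<And>y. \<rho> y > 0" and Dpos: "\<And>y. D y > 0"
begin

lemma D_growth:
  assumes B1: "\<And>y i. \<bar>partial i D y\<bar> \<le> B"
  shows "D x \<le> (\<bar>D 0\<bar> + real CARD('n) * B) * (1 + norm x)"
proof -
  have B0: "0 \<le> B" using B1 abs_ge_zero order_trans by blast
  have "\<bar>D (0 + 1 *\<^sub>R x) - D (0 + 0 *\<^sub>R x)\<bar> \<le> (real CARD('n) * (norm x * B)) * \<bar>1 - 0\<bar>"
  proof (rule mvt_bound)
    fix t :: real
    show "((\<lambda>t. D (0 + t *\<^sub>R x)) has_real_derivative (\<Sum>j\<in>UNIV. x$j * partial j D (0 + t *\<^sub>R x))) (at t)"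
      by (rule h_deriv[OF DC RC rpos Dpos])
    show "\<bar>\<Sum>j\<in>UNIV. x$j * partial j D (0 + t *\<^sub>R x)\<bar> \<le> real CARD('n) * (norm x * B)"
      by (rule sum_bound1[OF B1])
  qed
  then have "D x - D 0 \<le> real CARD('n) * B * norm x" by (simp add: abs_le_iff mult_ac)
  then have "D x \<le> \<bar>D 0\<bar> + real CARD('n) * B * norm x" by linarith
  also have "\<dots> \<le> (\<bar>D 0\<bar> + real CARD('n) * B) * (1 + norm x)"
    using B0 by (simp add: algebra_simps mult_left_mono mult_right_mono)
  finally show ?thesis .
qed

end

theorem lemma2:
  fixes D \<rho> g :: "real^'n::finite \<Rightarrow> real"
  assumes D_C4: "Ck 4 D"
    and rho_C4: "Ck 4 \<rho>"
    and rho_pos: "\<forall>x. \<rho> x > 0"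
    and D_bdd: "\<forall>is. 1 \<le> length is \<and> length is \<le> 4 \<longrightarrow> bounded (range (partials is D))"
    and lnrho_bdd: "\<forall>is. 1 \<le> length is \<and> length is \<le> 4 \<longrightarrow>
                      bounded (range (partials is (\<lambda>x. ln (\<rho> x))))"
    and D_hess_poly: "\<exists>p. polynomial_fun p \<and> (\<forall>x. norm (hessian D x) \<le> p x)"
    and lnrho_hess_poly: "\<exists>p. polynomial_fun p \<and> (\<forall>x. norm (hessian (\<lambda>y. ln (\<rho> y)) x) \<le> p x)"
    and D_inf: "\<exists>c>0. \<forall>x. c \<le> D x"
    and g_poly: "polynomial_fun g"
  shows "\<exists>K :: real^'n \<Rightarrow> real. (\<exists>C m. \<forall>x. \<bar>K x\<bar> \<le> C * (1 + norm x) ^ m) \<and>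
           (\<forall>x \<epsilon>. 0 < \<epsilon> \<and> \<epsilon> \<le> 1 \<longrightarrow>
              \<bar>LINT z|lborel. g z * (alpha D \<rho> x z \<epsilon> - beta D \<rho> x z \<epsilon>) * qker D x z\<bar>
                \<le> K x * \<epsilon>\<^sup>2)"
proof -
  have DC: "Ck 2 D"
  proof -
    have "Ck 3 D" using Ck_mono[of 3 D] D_C4 by (simp add: eval_nat_numeral)
    then show ?thesis using Ck_mono[of 2 D] by (simp add: eval_nat_numeral)
  qed
  have RC: "Ck 2 \<rho>"
  proof -
    have "Ck 3 \<rho>" using Ck_mono[of 3 \<rho>] rho_C4 by (simp add: eval_nat_numeral)
    then show ?thesis using Ck_mono[of 2 \<rho>] by (simp add: eval_nat_numeral)
  qed
  obtain c where c: "c > 0" "\<And>x. c \<le> D x" using D_inf by blast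
  have Dpos: "\<And>y. D y > 0" using c by (meson less_le_trans)
  have rpos: "\<And>y. \<rho> y > 0" using rho_pos by blast
  have bd: "\<exists>b. \<forall>y. \<bar>f y\<bar> \<le> b" if "bounded (range f)" for f :: "real^'n \<Rightarrow> real"
    using that unfolding bounded_iff by auto
  obtain B1 where B1: "\<And>i y. \<bar>partial i D y\<bar> \<le> B1"
  proof -
    have "\<exists>B. \<forall>i y. \<bar>partial i D y\<bar> \<le> B"
    proof (rule fin_bound)
      fix i show "\<exists>b. \<forall>y. \<bar>partial i D y\<bar> \<le> b"
        using bd[of "partials [i] D"] spec[OF D_bdd, of "[i]"] by simp
    qed
    then show ?thesis using that by blast
  qed
  obtain B2 where B2: "\<And>i j y. \<bar>partial i (partial j D) y\<bar> \<le> B2"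
  proof -
    have "\<exists>B. \<forall>ij y. \<bar>partial (fst ij) (partial (snd ij) D) y\<bar> \<le> B"
    proof (rule fin_bound)
      fix ij :: "'n \<times> 'n" show "\<exists>b. \<forall>y. \<bar>partial (fst ij) (partial (snd ij) D) y\<bar> \<le> b"
        using bd[of "partials [fst ij, snd ij] D"] spec[OF D_bdd, of "[fst ij, snd ij]"] by simp
    qed
    then show ?thesis using that by fastforce
  qed
  obtain B3 where B3: "\<And>i j y. \<bar>partial i (partial j (\<lambda>x. ln (\<rho> x))) y\<bar> \<le> B3"
  proof -
    have "\<exists>B. \<forall>ij y. \<bar>partial (fst ij) (partial (snd ij) (\<lambda>x. ln (\<rho> x))) y\<bar> \<le> B"
    proof (rule fin_bound)
      fix ij :: "'n \<times> 'n" show "\<exists>b. \<forall>y. \<bar>partial (fst ij) (partial (snd ij) (\<lambda>x. ln (\<rho> x))) y\<bar> \<le> b"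
        using bd[of "partials [fst ij, snd ij] (\<lambda>x. ln (\<rho> x))"] spec[OF lnrho_bdd, of "[fst ij, snd ij]"] by simp
    qed
    then show ?thesis using that by fastforce
  qed
  define B where "B = max B1 (max B2 B3)"
  have Bb1: "\<And>i y. \<bar>partial i D y\<bar> \<le> B" using B1 by (simp add: B_def le_max_iff_disj)
  have Bb2: "\<And>i j y. \<bar>partial i (partial j D) y\<bar> \<le> B" using B2 by (simp add: B_def le_max_iff_disj)
  have Bb3: "\<And>i j y. \<bar>partial i (partial j (\<lambda>x. ln (\<rho> x))) y\<bar> \<le> B" using B3 by (simp add: B_def le_max_iff_disj)
  have B0: "0 \<le> B" using Bb1 abs_ge_zero order_trans by blast
  obtain Cg m where Cg: "0 \<le> Cg" "\<And>z. \<bar>g z\<bar> \<le> Cg * (1 + norm z)^m" using poly_bound[OF g_poly] by blast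
  define k where "k = m + 4"
  define N where "N = real CARD('n)"
  define Mc where "Mc = Mcst N B c"
  have Mc0: "0 \<le> Mc" unfolding Mc_def Mcst_def N_def using B0 c
    by (intro add_nonneg_nonneg mult_nonneg_nonneg divide_nonneg_nonneg) auto
  define W where "W x = 1 + fact (2 * k) / ((2 / (sqrt (2 * D x))\<^sup>2)^k * fact k)" for x
  define Kc where "Kc = Cg * Mc * 4^(k * CARD('n))"
  have Kc0: "0 \<le> Kc" unfolding Kc_def using Cg Mc0 by simp
  define K where "K x = Kc * (W x)^CARD('n)" for x
  define F2 :: real where "F2 = fact (2 * k) / fact k"
  have F20: "0 \<le> F2" unfolding F2_def by simp
  have We: "W x = 1 + F2 * (D x)^k" for x
  proof -
    have "(sqrt (2 * D x))\<^sup>2 = 2 * D x" using Dpos[of x] by simp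
    then have "(2 / (sqrt (2 * D x))\<^sup>2)^k = 1 / (D x)^k" using Dpos[of x] by (simp add: power_one_over)
    then show ?thesis unfolding W_def F2_def using Dpos[of x] by simp
  qed
  define A where "A = \<bar>D 0\<bar> + N * B"
  have A0: "0 \<le> A" unfolding A_def N_def using B0 by simp
  have growth: "\<bar>K x\<bar> \<le> (Kc * (1 + F2 * A^k)^CARD('n)) * (1 + norm x)^(k * CARD('n))" for x
  proof -
    have Dg: "D x \<le> A * (1 + norm x)"
      unfolding A_def N_def by (rule D_growth[OF DC RC rpos Dpos Bb1])
    have "(D x)^k \<le> (A * (1 + norm x))^k" using Dg Dpos[of x] by (intro power_mono) auto
    then have "W x \<le> 1 + F2 * (A^k * (1 + norm x)^k)" unfolding We using F20
      by (simp add: power_mult_distrib mult_left_mono)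
    also have "\<dots> \<le> (1 + F2 * A^k) * (1 + norm x)^k"
    proof -
      have "1 \<le> (1 + norm x)^k" by simp
      then show ?thesis by (simp add: algebra_simps)
    qed
    finally have Wb: "W x \<le> (1 + F2 * A^k) * (1 + norm x)^k" .
    have W0: "0 \<le> W x" unfolding We using F20 Dpos[of x] by simp
    have "(W x)^CARD('n) \<le> ((1 + F2 * A^k) * (1 + norm x)^k)^CARD('n)" by (rule power_mono[OF Wb W0])
    also have "\<dots> = (1 + F2 * A^k)^CARD('n) * (1 + norm x)^(k * CARD('n))"
      by (simp add: power_mult_distrib power_mult)
    finally have "(W x)^CARD('n) \<le> (1 + F2 * A^k)^CARD('n) * (1 + norm x)^(k * CARD('n))" .
    then have "K x \<le> Kc * ((1 + F2 * A^k)^CARD('n) * (1 + norm x)^(k * CARD('n)))"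
      unfolding K_def using Kc0 by (rule mult_left_mono)
    moreover have "0 \<le> K x" unfolding K_def using Kc0 W0 by simp
    ultimately show ?thesis by (simp add: mult_ac)
  qed
  have main: "\<bar>LINT z|lborel. g z * (alpha D \<rho> x z \<epsilon> - beta D \<rho> x z \<epsilon>) * qker D x z\<bar> \<le> K x * \<epsilon>\<^sup>2"
    if e: "0 < \<epsilon>" "\<epsilon> \<le> 1" for x \<epsilon>
  proof -
    define \<sigma> where "\<sigma> = sqrt (2 * D x)"
    define G where "G z = \<epsilon>\<^sup>2 * Kc * (\<Prod>b\<in>Basis. normal_density 0 \<sigma> (z \<bullet> b) * (1 + (z \<bullet> b)^(2*k)))" for z :: "real^'n"
    have hG: "has_bochner_integral lborel G (\<epsilon>\<^sup>2 * Kc * (W x)^CARD('n))"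
      unfolding G_def W_def \<sigma>_def
      by (intro has_bochner_integral_mult_right gauss_int Dpos)
    have FG: "\<bar>g z * (alpha D \<rho> x z \<epsilon> - beta D \<rho> x z \<epsilon>) * qker D x z\<bar> \<le> G z" for z
    proof -
      have q: "qker D x z = (\<Prod>b\<in>Basis. normal_density 0 \<sigma> (z \<bullet> b))"
        unfolding \<sigma>_def by (rule q_prod[OF Dpos])
      have q0: "0 \<le> qker D x z" unfolding q by (intro prod_nonneg normal_density_nonneg)
      have ab: "\<bar>alpha D \<rho> x z \<epsilon> - beta D \<rho> x z \<epsilon>\<bar> \<le> Mc * (1 + norm z)^4 * \<epsilon>\<^sup>2"
        unfolding Mc_def N_def
        by (rule pointwise[OF DC RC rpos Dpos c Bb1 Bb2 Bb3]) (use e in simp)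
      have "\<bar>g z * (alpha D \<rho> x z \<epsilon> - beta D \<rho> x z \<epsilon>) * qker D x z\<bar>
          = \<bar>g z\<bar> * \<bar>alpha D \<rho> x z \<epsilon> - beta D \<rho> x z \<epsilon>\<bar> * qker D x z"
        using q0 by (simp add: abs_mult)
      also have "\<dots> \<le> (Cg * (1 + norm z)^m) * (Mc * (1 + norm z)^4 * \<epsilon>\<^sup>2) * qker D x z"
        using Cg(1) by (intro mult_right_mono mult_mono Cg ab q0) auto
      also have "\<dots> = Cg * Mc * \<epsilon>\<^sup>2 * ((1 + norm z)^(m + 4) * qker D x z)"
        by (simp add: power_add mult_ac)
      also have "\<dots> \<le> Cg * Mc * \<epsilon>\<^sup>2 * ((1 + norm z)^(2*k) * qker D x z)"
        using Cg Mc0 q0 unfolding k_def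
        by (intro mult_left_mono mult_right_mono power_increasing) auto
      also have "\<dots> \<le> Cg * Mc * \<epsilon>\<^sup>2 * ((4^(k * CARD('n)) * (\<Prod>b\<in>Basis. 1 + (z \<bullet> b)^(2*k))) * qker D x z)"
        using Cg Mc0 q0
        by (intro mult_left_mono mult_right_mono norm_pow_bound) auto
      also have "\<dots> = G z"
        unfolding G_def Kc_def q by (simp add: prod.distrib mult_ac)
      finally show ?thesis .
    qed
    show ?thesis
    proof (cases "integrable lborel (\<lambda>z. g z * (alpha D \<rho> x z \<epsilon> - beta D \<rho> x z \<epsilon>) * qker D x z)")
      case True
      have "\<bar>LINT z|lborel. g z * (alpha D \<rho> x z \<epsilon> - beta D \<rho> x z \<epsilon>) * qker D x z\<bar> \<le> (LINT z|lborel. G z)"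
        by (rule integral_abs_bound_integral[OF True integrable.intros[OF hG] FG])
      also have "(LINT z|lborel. G z) = K x * \<epsilon>\<^sup>2"
        using has_bochner_integral_integral_eq[OF hG] by (simp add: K_def mult_ac)
      finally show ?thesis .
    next
      case False
      have "0 \<le> K x" unfolding K_def We using Kc0 F20 Dpos[of x] by simp
      then show ?thesis using not_integrable_integral_eq[OF False] by simp
    qed
  qed
  show ?thesis
  proof (intro exI[of _ K] conjI)
    show "\<exists>C m. \<forall>x. \<bar>K x\<bar> \<le> C * (1 + norm x) ^ m" using growth by blast
    show "\<forall>x \<epsilon>. 0 < \<epsilon> \<and> \<epsilon> \<le> 1 \<longrightarrow>
       \<bar>LINT z|lborel. g z * (alpha D \<rho> x z \<epsilon> - beta D \<rho> x z \<epsilon>) * qker D x z\<bar> \<le> K x * \<epsilon>\<^sup>2"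
      using main by blast
  qed
qed


end
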